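(* Let $d,N\ge1$, let $L>C_{\mathcal U}$, and let $\Lambda_L^{(N)}(\mathbf x)$ and $\Lambda_L^{(N)}(\mathbf y)$ be two fully interactive $N$-particle cubes. If $d_S(\mathbf x,\mathbf y)\ge 8NL$, then $\Pi\Lambda_L^{(N)}(\mathbf x)$ and $\Pi\Lambda_L^{(N)}(\mathbf y)$ are disjoint subsets of $\mathbb Z^d$.
   Context: Points of $\mathbb Z^{Nd}$ are $\mathbf x=(x_1,\dots,x_N)$, $x_j\in\mathbb Z^d$; $d_S(\mathbf x,\mathbf y)=\min_{\pi\in S_N}\|\mathbf x-\pi\mathbf y\|_\infty$ with $\pi\mathbf y=(y_{\pi(1)},\dots,y_{\pi(N)})$; $\Lambda_L^{(N)}(\mathbf a)=\{\mathbf z\in\mathbb Z^{Nd}:d_S(\mathbf z,\mathbf a)\le L\}$. For $\Theta\subseteq\mathbb Z^{Nd}$, $\Pi\Theta=\bigcup_{n=1}^N\{z_n:\mathbf z\in\Theta\}\subseteq\mathbb Z^d$. Let $\mathcal U:\mathbb Z^d\to\mathbb R$ be a finitely supported interaction and $C_{\mathcal U}=\max_{u\in\operatorname{supp}\mathcal U}\|u\|+1$. A cube $\Lambda_L^{(N)}(\mathbf x)$ is partially interactive if there exist $1\le N_1,N_2<N$ with $N_1+N_2=N$ and disjoint $\mathcal S_1,\mathcal S_2\subseteq\mathbb Z^d$ with $\operatorname{dist}(\mathcal S_1,\mathcal S_2)\ge C_{\mathcal U}$ such that for all $\mathbf z\in\Lambda_L^{(N)}(\mathbf x)$: $\#\{j:z_j\in\mathcal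 S_1\}=N_1$ and $\#\{j:z_j\in\mathcal S_2\}=N_2$. It is fully interactive if it is not partially interactive. *)

theory Defs
  imports "HOL-Analysis.Analysis" "HOL-Combinatorics.Permutations"
begin

text \<open>Sites of Z^d are \<open>int ^ 'd\<close>; N-particle configurations (points of Z^{Nd}) are
  \<open>(int ^ 'd) ^ 'n\<close>, with d = CARD('d) and N = CARD('n).\<close>

definition supn :: "int ^ 'd \<Rightarrow> int" where
  "supn u = Max (range (\<lambda>i. \<bar>u $ i\<bar>))"

definition cfg_dist :: "(int ^ 'd) ^ 'n \<Rightarrow> (int ^ 'd) ^ 'n \<Rightarrow> int" where
  "cfg_dist x y = Max (range (\<lambda>j. supn (x $ j - y $ j)))"

definition permute_cfg :: "('n \<Rightarrow> 'n) \<Rightarrow> (int ^ 'd) ^ 'n \<Rightarrow> (int ^ 'd) ^ 'n" where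
  "permute_cfg \<pi> y = (\<chi> j. y $ (\<pi> j))"

definition dS :: "(int ^ 'd) ^ 'n \<Rightarrow> (int ^ 'd) ^ 'n \<Rightarrow> int" where
  "dS x y = Min {cfg_dist x (permute_cfg \<pi> y) | \<pi>. \<pi> permutes (UNIV :: 'n set)}"

definition cube :: "nat \<Rightarrow> (int ^ 'd) ^ 'n \<Rightarrow> ((int ^ 'd) ^ 'n) set" where
  "cube L a = {z. dS z a \<le> int L}"

definition Proj :: "((int ^ 'd) ^ 'n) set \<Rightarrow> (int ^ 'd) set" where
  "Proj \<Theta> = {z $ n | z n. z \<in> \<Theta>}"

definition C_U :: "(int ^ 'd \<Rightarrow> real) \<Rightarrow> int" where
  "C_U U = Max (insert 0 (supn ` {u. U u \<noteq> 0})) + 1"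

definition partially_interactive ::
    "(int ^ 'd \<Rightarrow> real) \<Rightarrow> nat \<Rightarrow> (int ^ 'd) ^ 'n \<Rightarrow> bool" where
  "partially_interactive U L x \<longleftrightarrow>
     (\<exists>N1 N2 (S1 :: (int ^ 'd) set) S2.
        1 \<le> N1 \<and> N1 < CARD('n) \<and> 1 \<le> N2 \<and> N2 < CARD('n) \<and> N1 + N2 = CARD('n) \<and>
        S1 \<inter> S2 = {} \<and>
        (\<forall>s1\<in>S1. \<forall>s2\<in>S2. C_U U \<le> supn (s1 - s2)) \<and>
        (\<forall>z\<in>cube L x. card {j. z $ j \<in> S1} = N1 \<and> card {j. z $ j \<in> S2} = N2))"

definition fully_interactive ::
    "(int ^ 'd \<Rightarrow> real) \<Rightarrow> nat \<Rightarrow> (int ^ 'd) ^ 'n \<Rightarrow> bool" where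
  "fully_interactive U L x \<longleftrightarrow> \<not> partially_interactive U L x"

end

theory Submission imports Defs begin
lemma supn_ge: "\<bar>u $ i\<bar> \<le> supn u"
  unfolding supn_def by (rule Max_ge) auto
lemma supn_le_iff: "supn u \<le> c \<longleftrightarrow> (\<forall>i. \<bar>u $ i\<bar> \<le> c)"
  unfolding supn_def by (subst Max_le_iff) auto
lemma supn_nonneg: "0 \<le> supn u"
  using supn_ge[of u undefined] by linarith
lemma supn_zero[simp]: "supn (0::int^'d) = 0"
  using supn_le_iff[of "0::int^'d" 0] supn_nonneg[of "0::int^'d"] by (simp del: supn_le_iff)
lemma supn_triangle: "supn (a + b) \<le> supn a + supn b"
  unfolding supn_le_iff
proof
  fix i show "\<bar>(a + b) $ i\<bar> \<le> supn a + supn b"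
    using supn_ge[of a i] supn_ge[of b i] by simp
qed
lemma supn_minus_le: "supn (a - b) \<le> supn (b - a)"
  unfolding supn_le_iff
proof
  fix i show "\<bar>(a - b) $ i\<bar> \<le> supn (b - a)"
    using supn_ge[of "b - a" i] by simp
qed
lemma supn_minus: "supn (a - b) = supn (b - a)"
  using supn_minus_le[of a b] supn_minus_le[of b a] by simp
lemma supn_tri3: "supn (a - c) \<le> supn (a - b) + supn (b - c)"
  using supn_triangle[of "a - b" "b - c"] by simp

lemma cfg_dist_le_iff: "cfg_dist x y \<le> c \<longleftrightarrow> (\<forall>j. supn (x $ j - y $ j) \<le> c)"
  unfolding cfg_dist_def by (subst Max_le_iff) auto

lemma dS_finite: "finite {cfg_dist x (permute_cfg \<pi> y) | \<pi>. \<pi> permutes (UNIV :: 'n::finite set)}"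
proof -
  have "{cfg_dist x (permute_cfg \<pi> y) | \<pi>. \<pi> permutes (UNIV :: 'n set)} =
     (\<lambda>\<pi>. cfg_dist x (permute_cfg \<pi> y)) ` {\<pi>. \<pi> permutes (UNIV :: 'n set)}" by auto
  then show ?thesis using finite_permutations by simp
qed

lemma dS_le_cfg: "dS x y \<le> cfg_dist x (y :: (int^'d)^'n::finite)"
proof -
  have "permute_cfg id y = y" unfolding permute_cfg_def by simp
  then have "cfg_dist x y \<in> {cfg_dist x (permute_cfg \<pi> y) | \<pi>. \<pi> permutes (UNIV :: 'n set)}"
  proof -
    have "\<exists>\<pi>. cfg_dist x y = cfg_dist x (permute_cfg \<pi> y) \<and> \<pi> permutes (UNIV::'n set)"
      using \<open>permute_cfg id y = y\<close> permutes_id by metis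
    then show ?thesis by simp
  qed
  then show ?thesis unfolding dS_def using dS_finite by (rule Min_le[rotated])
qed

lemma dS_obtain:
  fixes z a :: "(int^'d)^'n::finite"
  obtains \<pi> where "\<pi> permutes UNIV" "\<And>j. supn (z $ j - a $ \<pi> j) \<le> dS z a"
proof -
  have "dS z a \<in> {cfg_dist z (permute_cfg \<pi> a) | \<pi>. \<pi> permutes (UNIV :: 'n set)}"
    unfolding dS_def apply (rule Min_in[OF dS_finite])
    using permutes_id by blast
  then obtain \<pi> where p: "\<pi> permutes UNIV" "dS z a = cfg_dist z (permute_cfg \<pi> a)" by auto
  then have "\<And>j. supn (z $ j - a $ \<pi> j) \<le> dS z a"
    using cfg_dist_le_iff[of z "permute_cfg \<pi> a" "dS z a"] unfolding permute_cfg_def by simp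
  with p that show ?thesis by blast
qed

lemma C_U_pos: assumes "finite {u. U u \<noteq> 0}" shows "1 \<le> C_U U"
proof -
  have "0 \<le> Max (insert 0 (supn ` {u. U u \<noteq> 0}))"
    using assms by (intro Max_ge) auto
  then show ?thesis unfolding C_U_def by simp
qed

lemma split_pi:
  fixes x :: "(int^'d)^'n::finite"
  assumes fin: "finite {u. U u \<noteq> 0}"
    and J: "J \<noteq> {}" "J \<noteq> UNIV"
    and far: "\<And>i j. i \<in> J \<Longrightarrow> j \<notin> J \<Longrightarrow> 2 * int L + C_U U \<le> supn (x $ i - x $ j)"
  shows "partially_interactive U L x"
proof -
  define S1 where "S1 = {p. \<exists>i\<in>J. supn (p - x $ i) \<le> int L}"
  define S2 where "S2 = {p. \<exists>i\<in>-J. supn (p - x $ i) \<le> int L}"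
  have C: "1 \<le> C_U U" using C_U_pos[OF fin] .
  have cJ: "card J + card (-J) = CARD('n)"
    using card_Un_disjoint[of J "-J"] by (simp add: Compl_partition)
  have c1: "1 \<le> card J" using J by (simp add: Suc_le_eq card_gt_0_iff)
  have c2: "1 \<le> card (-J)" using J by (simp add: Suc_le_eq card_gt_0_iff) (metis Compl_empty_eq double_complement)
  have sep: "C_U U \<le> supn (s1 - s2)" if s12: "s1 \<in> S1" "s2 \<in> S2" for s1 s2
  proof -
    obtain i j where ij: "i \<in> J" "j \<notin> J" "supn (s1 - x $ i) \<le> int L" "supn (s2 - x $ j) \<le> int L"
      using s12 unfolding S1_def S2_def by auto
    have "supn (x $ i - x $ j) \<le> supn (x $ i - s1) + supn (s1 - s2) + supn (s2 - x $ j)"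
      using supn_tri3[of "x $ i" "x $ j" s1] supn_tri3[of s1 "x $ j" s2] by linarith
    then show ?thesis using far[OF ij(1,2)] ij(3,4) supn_minus[of "x $ i" s1] by linarith
  qed
  have disj: "S1 \<inter> S2 = {}"
  proof (rule ccontr)
    assume "S1 \<inter> S2 \<noteq> {}"
    then obtain p where "p \<in> S1" "p \<in> S2" by blast
    from sep[OF this] C show False by simp
  qed
  have cnt: "card {j. z $ j \<in> S1} = card J \<and> card {j. z $ j \<in> S2} = card (-J)"
    if zc: "z \<in> cube L x" for z
  proof -
    obtain \<pi> where p: "\<pi> permutes UNIV" "\<And>j. supn (z $ j - x $ \<pi> j) \<le> dS z x"
      using dS_obtain by blast
    have dz: "dS z x \<le> int L" using zc unfolding cube_def by simp
    have in1: "z $ j \<in> S1" if "\<pi> j \<in> J" for j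
      using p(2)[of j] dz that unfolding S1_def by force
    have in2: "z $ j \<in> S2" if "\<pi> j \<notin> J" for j
      using p(2)[of j] dz that unfolding S2_def by force
    have e1: "{j. z $ j \<in> S1} = \<pi> -` J"
      using in1 in2 disj by blast
    have e2: "{j. z $ j \<in> S2} = \<pi> -` (-J)"
      using in1 in2 disj by blast
    have b: "bij \<pi>" using p(1) permutes_bij by blast
    have "card (\<pi> -` A) = card A" for A
      by (metis b bij_betw_same_card bij_betw_subset bij_vimage_eq_inv_image bij_imp_bij_inv subset_UNIV bij_betw_imp_surj_on)
    then show ?thesis using e1 e2 by simp
  qed
  show ?thesis unfolding partially_interactive_def
    apply (rule exI[of _ "card J"], rule exI[of _ "card (-J)"], rule exI[of _ S1], rule exI[of _ S2])
    using cJ c1 c2 disj sep cnt by auto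
qed

lemma connected_bound:
  fixes x :: "(int^'d)^'n::finite"
  assumes fin: "finite {u. U u \<noteq> 0}" and fi: "fully_interactive U L x"
  shows "supn (x $ i - x $ k) \<le> int (CARD('n) - 1) * (2 * int L + C_U U)"
proof -
  define D where "D = 2 * int L + C_U U"
  have D0: "0 \<le> D" using C_U_pos[OF fin] unfolding D_def by simp
  define S where "S m = {i. supn (x $ i - x $ k) \<le> int m * D}" for m
  have kS: "k \<in> S m" for m using D0 unfolding S_def by simp
  have mono: "S m \<subseteq> S (Suc m)" for m
    unfolding S_def using D0 by (auto simp: algebra_simps)
  have claim: "S m = UNIV \<or> m + 1 \<le> card (S m)" for m
  proof (induction m)
    case 0
    have "S 0 \<noteq> {}" using kS by blast
    then show ?case by (simp add: Suc_le_eq card_gt_0_iff)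
  next
    case (Suc m)
    show ?case
    proof (cases "S m = UNIV")
      case True then show ?thesis using mono[of m] by auto
    next
      case False
      have ne: "S m \<noteq> {}" using kS by blast
      have "\<not> (\<forall>i j. i \<in> S m \<longrightarrow> j \<notin> S m \<longrightarrow> 2 * int L + C_U U \<le> supn (x $ i - x $ j))"
        using split_pi[OF fin ne False] fi unfolding fully_interactive_def by blast
      then obtain i j where ij: "i \<in> S m" "j \<notin> S m" "supn (x $ i - x $ j) < D"
        unfolding D_def by force
      have "supn (x $ j - x $ k) \<le> supn (x $ j - x $ i) + supn (x $ i - x $ k)"
        by (rule supn_tri3)
      then have "supn (x $ j - x $ k) \<le> int (Suc m) * D"
        using ij supn_minus[of "x $ j" "x $ i"] unfolding S_def by (auto simp: algebra_simps)
      then have "j \<in> S (Suc m)" unfolding S_def by simp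
      then have "S m \<subset> S (Suc m)" using mono[of m] ij(2) by blast
      then have "card (S m) < card (S (Suc m))" by (rule psubset_card_mono[rotated]) simp
      then show ?thesis using Suc False by auto
    qed
  qed
  have "S (CARD('n) - 1) = UNIV"
  proof -
    have c: "CARD('n) \<ge> 1" by (simp add: Suc_le_eq)
    from claim[of "CARD('n) - 1"] show ?thesis
    proof
      assume "CARD('n) - 1 + 1 \<le> card (S (CARD('n) - 1))"
      then have "card (UNIV::'n set) \<le> card (S (CARD('n) - 1))" using c by simp
      then show ?thesis by (metis card_seteq finite subset_UNIV)
    qed
  qed
  then show ?thesis unfolding S_def D_def by auto
qed

theorem lemma3p5:
  fixes U :: "int ^ 'd \<Rightarrow> real"
    and x y :: "(int ^ 'd) ^ 'n"
    and L :: nat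
  assumes "finite {u. U u \<noteq> 0}"
    and "int L > C_U U"
    and "fully_interactive U L x"
    and "fully_interactive U L y"
    and "dS x y \<ge> 8 * int CARD('n) * int L"
  shows "Proj (cube L x) \<inter> Proj (cube L y) = {}"
proof (rule ccontr)
  assume "Proj (cube L x) \<inter> Proj (cube L y) \<noteq> {}"
  then obtain p where "p \<in> Proj (cube L x)" "p \<in> Proj (cube L y)" by blast
  then obtain z n w m where z: "p = z $ n" "z \<in> cube L x" and w: "p = w $ m" "w \<in> cube L y"
    unfolding Proj_def by blast
  obtain \<pi> where "\<pi> permutes UNIV" "\<And>j. supn (z $ j - x $ \<pi> j) \<le> dS z x"
    using dS_obtain by blast
  then have a: "supn (p - x $ \<pi> n) \<le> int L" using z unfolding cube_def by (metis order_trans mem_Collect_eq)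
  obtain \<sigma> where "\<sigma> permutes UNIV" "\<And>j. supn (w $ j - y $ \<sigma> j) \<le> dS w y"
    using dS_obtain by blast
  then have b: "supn (p - y $ \<sigma> m) \<le> int L" using w unfolding cube_def by (metis order_trans mem_Collect_eq)
  define M where "M = int (CARD('n) - 1)"
  define D where "D = 2 * int L + C_U U"
  have M0: "0 \<le> M" unfolding M_def by simp
  have NM: "int CARD('n) = M + 1" unfolding M_def by (simp add: Suc_le_eq of_nat_diff)
  have L0: "0 < int L" using C_U_pos[OF assms(1)] assms(2) by simp
  have MD: "M * D \<le> M * (3 * int L)"
    using M0 assms(2) unfolding D_def by (intro mult_left_mono) auto
  have bx: "supn (x $ i - x $ k) \<le> M * D" for i k
    using connected_bound[OF assms(1) assms(3)] unfolding M_def D_def by blast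
  have by': "supn (y $ i - y $ k) \<le> M * D" for i k
    using connected_bound[OF assms(1) assms(4)] unfolding M_def D_def by blast
  have "supn (x $ j - y $ j) \<le> 2 * (M * D) + 2 * int L" for j
  proof -
    have "supn (x $ j - y $ j) \<le> supn (x $ j - x $ \<pi> n) + supn (x $ \<pi> n - y $ j)"
      by (rule supn_tri3)
    moreover have "supn (x $ \<pi> n - y $ j) \<le> supn (x $ \<pi> n - p) + supn (p - y $ j)"
      by (rule supn_tri3)
    moreover have "supn (p - y $ j) \<le> supn (p - y $ \<sigma> m) + supn (y $ \<sigma> m - y $ j)"
      by (rule supn_tri3)
    ultimately show ?thesis using a b bx[of j "\<pi> n"] by'[of "\<sigma> m" j] supn_minus[of "x $ \<pi> n" p]
      by linarith
  qed
  then have "cfg_dist x y \<le> 2 * (M * D) + 2 * int L" by (simp add: cfg_dist_le_iff)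
  moreover have "2 * (M * D) + 2 * int L < 8 * int CARD('n) * int L"
  proof -
    have "0 \<le> M * int L" using M0 L0 by simp
    then show ?thesis using MD L0 unfolding NM by (simp add: algebra_simps)
  qed
  ultimately show False using dS_le_cfg[of x y] assms(5) by linarith
qed
end
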